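(* For $n>4$, the 1-skeleton of the network space $\mathfrak S_n$ is the complete graph on $\delta=2^{n-1}-n-1$ vertices.
   Context: $X$ is a set of $n$ labels. A split of $X$ is an unordered partition of $X$ into two nonempty sets; it is trivial if one part is a singleton. A circular ordering of $X$ is a cyclic arrangement $\pi=(x_1,\dots,x_n)$ up to rotation and reflection; a split is circular w.r.t. $\pi$ if it has the form $\{\{x_{i+1},\dots,x_j\},X\setminus\{x_{i+1},\dots,x_j\}\}$ (indices mod $n$). Give $\mathbb R^\delta$ coordinates indexed by the nontrivial splits. For each circular ordering $\pi$, $O_\pi$ is the set of nonnegative vectors supported on splits circular w.r.t. $\pi$, and the chamber $\Delta_\pi=O_\pi\cap\{\sum_s x_s=1\}$. The network space is $\mathfrak S_n=\bigcup_\pi\Delta_\pi$, a simplicial complex whose simplices are the faces of the chambers; its vertices are the unit vectors of nontrivial splits. *)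

theory Defs
  imports Main
begin

definition is_split :: "'a set \<Rightarrow> 'a set set \<Rightarrow> bool" where
  "is_split X S \<longleftrightarrow> (\<exists>A. A \<subseteq> X \<and> A \<noteq> {} \<and> A \<noteq> X \<and> S = {A, X - A})"

definition nontrivial_split :: "'a set \<Rightarrow> 'a set set \<Rightarrow> bool" where
  "nontrivial_split X S \<longleftrightarrow> is_split X S \<and> (\<forall>A\<in>S. \<not> (\<exists>x. A = {x}))"

text \<open>A circular ordering of X, represented by a list enumerating X once
  (rotations/reflections give the same set of circular splits).\<close>
definition circ_ordering :: "'a set \<Rightarrow> 'a list \<Rightarrow> bool" where
  "circ_ordering X xs \<longleftrightarrow> distinct xs \<and> set xs = X"

text \<open>S is circular w.r.t. xs: one part is a cyclically contiguous block
  {x_{i+1},...,x_j}, i.e. a proper nonempty prefix of a rotation of xs.\<close>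
definition circular_split :: "'a set \<Rightarrow> 'a list \<Rightarrow> 'a set set \<Rightarrow> bool" where
  "circular_split X xs S \<longleftrightarrow>
     (\<exists>r k. 0 < k \<and> k < length xs \<and>
        S = {set (take k (rotate r xs)), X - set (take k (rotate r xs))})"

text \<open>Simplices of the network space: the (nonempty) faces of the chambers,
  recorded by their vertex sets, i.e. nonempty sets of nontrivial splits that
  are all circular w.r.t. one common circular ordering.\<close>
definition network_simplex :: "'a set \<Rightarrow> 'a set set set \<Rightarrow> bool" where
  "network_simplex X \<sigma> \<longleftrightarrow> \<sigma> \<noteq> {} \<and>
     (\<exists>xs. circ_ordering X xs \<and> (\<forall>S\<in>\<sigma>. nontrivial_split X S \<and> circular_split X xs S))"

definition network_vertices :: "'a set \<Rightarrow> 'a set set set" where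
  "network_vertices X = {S. network_simplex X {S}}"

definition network_edges :: "'a set \<Rightarrow> 'a set set set set" where
  "network_edges X = {\<sigma>. network_simplex X \<sigma> \<and> card \<sigma> = 2}"

end

theory Submission
  imports Defs
begin

lemma two_splits:
  assumes fin: "finite X"
    and A: "A \<subseteq> X" "A \<noteq> {}" "A \<noteq> X"
    and B: "B \<subseteq> X" "B \<noteq> {}" "B \<noteq> X"
  shows "\<exists>xs. circ_ordering X xs \<and> circular_split X xs {A, X - A} \<and> circular_split X xs {B, X - B}"
proof -
  have fA: "finite A" "finite B" using fin A B finite_subset by auto
  obtain l1 where l1: "distinct l1" "set l1 = A - B" using finite_distinct_list[of "A - B"] fA by auto
  obtain l2 where l2: "distinct l2" "set l2 = A \<inter> B" using finite_distinct_list[of "A \<inter> B"] fA by auto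
  obtain l3 where l3: "distinct l3" "set l3 = B - A" using finite_distinct_list[of "B - A"] fA by auto
  obtain l4 where l4: "distinct l4" "set l4 = X - (A \<union> B)" using finite_distinct_list[of "X - (A \<union> B)"] fin by auto
  define xs where "xs = l1 @ l2 @ l3 @ l4"
  have co: "circ_ordering X xs"
    unfolding circ_ordering_def xs_def using l1 l2 l3 l4 A B by auto
  have len: "length xs = length l1 + length l2 + length l3 + length l4" by (simp add: xs_def)
  have c1: "circular_split X xs {A, X - A}"
    unfolding circular_split_def
  proof (intro exI conjI)
    have t: "take (length l1 + length l2) (rotate 0 xs) = l1 @ l2" by (simp add: xs_def)
    have sA: "set (l1 @ l2) = A" using l1 l2 by auto
    show "{A, X - A} = {set (take (length l1 + length l2) (rotate 0 xs)), X - set (take (length l1 + length l2) (rotate 0 xs))}"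
      using t sA by simp
    show "0 < length l1 + length l2" using sA A(2) by (cases l1; cases l2; auto)
    have "set l3 \<union> set l4 \<noteq> {}" using l3 l4 A by auto
    then have "length l3 + length l4 > 0" by (cases l3; cases l4; auto)
    then show "length l1 + length l2 < length xs" using len by simp
  qed
  have c2: "circular_split X xs {B, X - B}"
    unfolding circular_split_def
  proof (intro exI conjI)
    have r: "rotate (length l1) xs = l2 @ l3 @ l4 @ l1"
      unfolding xs_def by (metis append.assoc rotate_append)
    have t: "take (length l2 + length l3) (rotate (length l1) xs) = l2 @ l3" by (simp add: r)
    have sB: "set (l2 @ l3) = B" using l2 l3 by auto
    show "{B, X - B} = {set (take (length l2 + length l3) (rotate (length l1) xs)), X - set (take (length l2 + length l3) (rotate (length l1) xs))}"
      using t sB by simp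
    show "0 < length l2 + length l3" using sB B(2) by (cases l2; cases l3; auto)
    have "set l1 \<union> set l4 \<noteq> {}" using l1 l4 B by auto
    then have "length l1 + length l4 > 0" by (cases l1; cases l4; auto)
    then show "length l2 + length l3 < length xs" using len by simp
  qed
  show ?thesis using co c1 c2 by blast
qed

lemma vertices_eq:
  assumes "finite X"
  shows "network_vertices X = {S. nontrivial_split X S}"
proof
  show "network_vertices X \<subseteq> {S. nontrivial_split X S}"
    unfolding network_vertices_def network_simplex_def by auto
next
  show "{S. nontrivial_split X S} \<subseteq> network_vertices X"
  proof
    fix S assume "S \<in> {S. nontrivial_split X S}"
    then have ns: "nontrivial_split X S" by simp
    then obtain A where A: "A \<subseteq> X" "A \<noteq> {}" "A \<noteq> X" "S = {A, X - A}"
      unfolding nontrivial_split_def is_split_def by blast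
    from two_splits[OF assms A(1-3) A(1-3)] A(4) ns
    show "S \<in> network_vertices X"
      unfolding network_vertices_def network_simplex_def by auto
  qed
qed

theorem corollary8:
  fixes X :: "'a set"
  assumes "finite X" and "card X > 4"
  shows "network_edges X = {\<sigma>. \<sigma> \<subseteq> network_vertices X \<and> card \<sigma> = 2}
       \<and> card (network_vertices X) = 2 ^ (card X - 1) - card X - 1"
proof
  have V: "network_vertices X = {S. nontrivial_split X S}" using vertices_eq[OF assms(1)] .
  show "network_edges X = {\<sigma>. \<sigma> \<subseteq> network_vertices X \<and> card \<sigma> = 2}"
  proof
    show "network_edges X \<subseteq> {\<sigma>. \<sigma> \<subseteq> network_vertices X \<and> card \<sigma> = 2}"
      unfolding network_edges_def network_vertices_def network_simplex_def by auto
  next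
    show "{\<sigma>. \<sigma> \<subseteq> network_vertices X \<and> card \<sigma> = 2} \<subseteq> network_edges X"
    proof
      fix \<sigma> assume "\<sigma> \<in> {\<sigma>. \<sigma> \<subseteq> network_vertices X \<and> card \<sigma> = 2}"
      then have s: "\<sigma> \<subseteq> {S. nontrivial_split X S}" "card \<sigma> = 2" using V by auto
      then obtain S T where ST: "\<sigma> = {S, T}" by (meson card_2_iff)
      have nS: "nontrivial_split X S" and nT: "nontrivial_split X T" using s ST by auto
      obtain A where A: "A \<subseteq> X" "A \<noteq> {}" "A \<noteq> X" "S = {A, X - A}"
        using nS unfolding nontrivial_split_def is_split_def by blast
      obtain B where B: "B \<subseteq> X" "B \<noteq> {}" "B \<noteq> X" "T = {B, X - B}"
        using nT unfolding nontrivial_split_def is_split_def by blast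
      from two_splits[OF assms(1) A(1-3) B(1-3)] A(4) B(4) nS nT ST s(2)
      show "\<sigma> \<in> network_edges X"
        unfolding network_edges_def network_simplex_def by auto
    qed
  qed
  obtain x0 where x0: "x0 \<in> X" using assms by fastforce
  define f where "f = (\<lambda>A. {A, X - A})"
  define SS where "SS = {A. A \<subseteq> X \<and> x0 \<in> A \<and> A \<noteq> X \<and> \<not> (\<exists>x. A = {x}) \<and> \<not> (\<exists>x. X - A = {x})}"
  have img: "{S. nontrivial_split X S} = f ` SS"
  proof
    show "{S. nontrivial_split X S} \<subseteq> f ` SS"
    proof
      fix S assume "S \<in> {S. nontrivial_split X S}"
      then obtain A where A: "A \<subseteq> X" "A \<noteq> {}" "A \<noteq> X" "S = {A, X - A}"
        and nt: "\<forall>C\<in>S. \<not> (\<exists>x. C = {x})"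
        unfolding nontrivial_split_def is_split_def by auto
      show "S \<in> f ` SS"
      proof (cases "x0 \<in> A")
        case True
        then have "A \<in> SS" using A nt unfolding SS_def by auto
        then show ?thesis using A unfolding f_def by auto
      next
        case False
        have XX: "X - (X - A) = A" using A by auto
        have "X - A \<in> SS" using A nt False x0 XX unfolding SS_def by auto
        moreover have "S = f (X - A)" using A XX unfolding f_def by auto
        ultimately show ?thesis by auto
      qed
    qed
  next
    show "f ` SS \<subseteq> {S. nontrivial_split X S}"
    proof
      fix S assume "S \<in> f ` SS"
      then obtain A where A: "A \<in> SS" "S = f A" by auto
      then show "S \<in> {S. nontrivial_split X S}"
        unfolding SS_def f_def nontrivial_split_def is_split_def by blast
    qed
  qed
  have inj: "inj_on f SS"
  proof
    fix A A' assume a: "A \<in> SS" "A' \<in> SS" "f A = f A'"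
    then have "A = A' \<or> A = X - A'" unfolding f_def by (metis doubleton_eq_iff)
    then show "A = A'" using a(1,2) unfolding SS_def by auto
  qed
  define T where "T = {A. A \<subseteq> X \<and> x0 \<in> A}"
  define E where "E = insert {x0} (insert X ((\<lambda>y. X - {y}) ` (X - {x0})))"
  have n3: "card X \<ge> 3" using assms by simp
  have SSeq: "SS = T - E"
  proof
    show "SS \<subseteq> T - E"
    proof
      fix A assume a: "A \<in> SS"
      have "A \<noteq> X - {y}" if "y \<in> X - {x0}" for y
      proof
        assume "A = X - {y}"
        then have "X - A = {y}" using that by auto
        then show False using a unfolding SS_def by auto
      qed
      then show "A \<in> T - E" using a unfolding SS_def T_def E_def by auto
    qed
  next
    show "T - E \<subseteq> SS"
    proof
      fix A assume a: "A \<in> T - E"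
      have 1: "A \<subseteq> X" "x0 \<in> A" "A \<noteq> X" "A \<noteq> {x0}" using a unfolding T_def E_def by auto
      have 2: "\<not> (\<exists>x. A = {x})" using 1 by auto
      have 3: "\<not> (\<exists>x. X - A = {x})"
      proof
        assume "\<exists>x. X - A = {x}"
        then obtain y where y: "X - A = {y}" by auto
        then have "A = X - {y}" "y \<in> X - {x0}" using 1 by auto
        then show False using a unfolding E_def by auto
      qed
      show "A \<in> SS" using 1 2 3 unfolding SS_def by auto
    qed
  qed
  have finX0: "finite (X - {x0})" using assms by auto
  have cT: "card T = 2 ^ (card X - 1)"
  proof -
    have "T = insert x0 ` Pow (X - {x0})"
    proof
      show "T \<subseteq> insert x0 ` Pow (X - {x0})"
      proof
        fix A assume a: "A \<in> T"
        then have "A = insert x0 (A - {x0})" "A - {x0} \<in> Pow (X - {x0})" unfolding T_def by auto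
        then show "A \<in> insert x0 ` Pow (X - {x0})" by (rule image_eqI)
      qed
      show "insert x0 ` Pow (X - {x0}) \<subseteq> T" using x0 unfolding T_def by auto
    qed
    moreover have "inj_on (insert x0) (Pow (X - {x0}))"
    proof (rule inj_onI)
      fix A B assume "A \<in> Pow (X - {x0})" "B \<in> Pow (X - {x0})" "insert x0 A = insert x0 B"
      then have "A = insert x0 A - {x0}" "B = insert x0 B - {x0}" "insert x0 A = insert x0 B" by auto
      then show "A = B" by simp
    qed
    ultimately have "card T = card (Pow (X - {x0}))" by (simp add: card_image)
    also have "\<dots> = 2 ^ card (X - {x0})" using finX0 by (simp add: card_Pow)
    finally show ?thesis using x0 assms by simp
  qed
  have cE: "card E = card X + 1"
  proof -
    have injd: "inj_on (\<lambda>y. X - {y}) (X - {x0})" by (rule inj_onI) auto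
    have ci: "card ((\<lambda>y. X - {y}) ` (X - {x0})) = card X - 1"
      using card_image[OF injd] x0 assms by simp
    have nX: "X \<notin> (\<lambda>y. X - {y}) ` (X - {x0})" by auto
    have nx0: "{x0} \<noteq> X" using n3 by auto
    have nx1: "{x0} \<notin> (\<lambda>y. X - {y}) ` (X - {x0})"
    proof
      assume "{x0} \<in> (\<lambda>y. X - {y}) ` (X - {x0})"
      then obtain y where y: "y \<in> X" "{x0} = X - {y}" by auto
      then have "X \<subseteq> {x0, y}" by auto
      then have "card X \<le> card {x0, y}" by (simp add: card_mono)
      also have "\<dots> \<le> 2" by (simp add: card_insert_le_m1)
      finally show False using n3 by simp
    qed
    have fi: "finite ((\<lambda>y. X - {y}) ` (X - {x0}))" using finX0 by simp
    show ?thesis unfolding E_def using ci nX nx0 nx1 fi n3 by simp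
  qed
  have ET: "E \<subseteq> T" unfolding E_def T_def using x0 by auto
  have finT: "finite T" unfolding T_def using assms(1) by simp
  have "card (network_vertices X) = card SS" using V img card_image[OF inj] by simp
  also have "\<dots> = card T - card E" unfolding SSeq using card_Diff_subset[OF finite_subset[OF ET finT] ET] .
  finally show "card (network_vertices X) = 2 ^ (card X - 1) - card X - 1" using cT cE by simp
qed

end
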